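(* Let $m$ be a positive integer. Every $2^m(2^{m+1}+1)^{m+2}$-$T_0T^\ast$-perfect number $n>1$ has the form $p_1^{2^{m+1}(2^{m+1}+1)^{m+2}-1}$ for a prime $p_1$, or the form $p_1\cdots p_{m+2}$ for distinct primes $p_1,\dots,p_{m+2}$.
   Context: For a positive integer $m'$, $T(m')$ denotes the product of all positive divisors of $m'$, and $T^\ast(m')$ the product of all unitary divisors of $m'$ (divisors $d$ with $\gcd(d,m'/d)=1$). For an integer $K\ge 2$, an integer $n>1$ is called $K$-$T_0T^\ast$-perfect if $T(T^\ast(n))=n^K$. *)

theory Defs
  imports "HOL-Computational_Algebra.Primes"
begin

definition divprod :: "nat \<Rightarrow> nat" where
  "divprod m = (\<Prod>d\<in>{d. d dvd m}. d)"

definition unitary_divprod :: "nat \<Rightarrow> nat" where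
  "unitary_divprod m = (\<Prod>d\<in>{d. d dvd m \<and> coprime d (m div d)}. d)"

text \<open>n > 1 is K-T0T*-perfect if T(T*(n)) = n^K.\<close>
definition K_T0Tstar_perfect :: "nat \<Rightarrow> nat \<Rightarrow> bool" where
  "K_T0Tstar_perfect K n \<longleftrightarrow> n > 1 \<and> divprod (unitary_divprod n) = n ^ K"

end

theory Submission
  imports Defs "HOL-Library.FuncSet"
begin


lemma prod_sq_pair:
  fixes m :: nat
  assumes "m > 0" "finite A" "\<And>d. d \<in> A \<Longrightarrow> d dvd m" "\<And>d. d \<in> A \<Longrightarrow> m div d \<in> A"
  shows "(\<Prod>A)^2 = m ^ card A"
proof -
  have "(\<Prod>d\<in>A. m div d) = (\<Prod>d\<in>A. d)"
    by (rule prod.reindex_bij_witness[where i="\<lambda>d. m div d" and j="\<lambda>d. m div d"])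
       (use assms in \<open>auto simp: div_div_eq_right\<close>)
  hence "(\<Prod>A)^2 = (\<Prod>d\<in>A. d) * (\<Prod>d\<in>A. m div d)" by (simp add: power2_eq_square)
  also have "\<dots> = (\<Prod>d\<in>A. d * (m div d))" by (simp add: prod.distrib)
  also have "\<dots> = (\<Prod>d\<in>A. m)" by (intro prod.cong) (auto dest: assms(3))
  finally show ?thesis by simp
qed

lemma divprod_sq: "m > 0 \<Longrightarrow> (divprod m)^2 = m ^ card {d. d dvd m}"
  unfolding divprod_def
  by (rule prod_sq_pair) (auto simp: div_div_eq_right)

lemma unitary_sq: "m > 0 \<Longrightarrow> (unitary_divprod m)^2 = m ^ card {d. d dvd m \<and> coprime d (m div d)}"
  unfolding unitary_divprod_def
  by (rule prod_sq_pair) (auto simp: div_div_eq_right coprime_commute)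



definition mu :: "nat \<Rightarrow> nat \<Rightarrow> nat \<Rightarrow> nat" where
  "mu N d = restrict (\<lambda>p. multiplicity p d) (prime_factors N)"

lemma mu_inj: assumes "N > 0" shows "inj_on (mu N) {d. d dvd N}"
proof (rule inj_onI)
  fix x y assume x: "x \<in> {d. d dvd N}" and y: "y \<in> {d. d dvd N}" and e: "mu N x = mu N y"
  have "x > 0" "y > 0" using x y assms by (auto intro!: gr0I)
  show "x = y"
  proof (rule multiplicity_eq_nat[OF \<open>x>0\<close> \<open>y>0\<close>])
    fix p :: nat assume p: "prime p"
    show "multiplicity p x = multiplicity p y"
    proof (cases "p \<in> prime_factors N")
      case True
      then show ?thesis using fun_cong[OF e, of p] by (simp add: mu_def)
    next
      case False
      hence "\<not> p dvd N" using p assms by (auto intro: prime_factorsI)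
      hence "\<not> p dvd x" "\<not> p dvd y" using x y dvd_trans by blast+
      thus ?thesis by (simp add: not_dvd_imp_multiplicity_0)
    qed
  qed
qed

lemma mu_prod:
  assumes "N > 0" "f \<in> (\<Pi>\<^sub>E p\<in>prime_factors N. {0..multiplicity p N})"
  shows "mu N (\<Prod>p\<in>prime_factors N. p ^ f p) = f"
        "(\<Prod>p\<in>prime_factors N. p ^ f p) dvd N"
proof -
  show "mu N (\<Prod>p\<in>prime_factors N. p ^ f p) = f"
    unfolding mu_def
  proof (rule ext)
    fix q
    show "restrict (\<lambda>p. multiplicity p (\<Prod>p\<in>prime_factors N. p ^ f p)) (prime_factors N) q = f q"
    proof (cases "q \<in> prime_factors N")
      case True
      hence "prime q" by (rule in_prime_factors_imp_prime)
      have "multiplicity q (\<Prod>p\<in>prime_factors N. p ^ f p) = f q"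
        using multiplicity_prod_prime_powers[of "prime_factors N" q f, OF finite_set_mset in_prime_factors_imp_prime \<open>prime q\<close>] True by simp
      then show ?thesis using True by simp
    next
      case False
      then show ?thesis using assms(2) PiE_arb[OF assms(2) False] by (simp add: mu_def)
    qed
  qed
  have "(\<Prod>p\<in>prime_factors N. p ^ f p) dvd (\<Prod>p\<in>prime_factors N. p ^ multiplicity p N)"
  proof (rule prod_dvd_prod)
    fix p assume p: "p \<in> prime_factors N"
    have "f p \<in> {0..multiplicity p N}" using assms(2) p by (rule PiE_mem)
    hence "f p \<le> multiplicity p N" by simp
    thus "p ^ f p dvd p ^ multiplicity p N" by (rule le_imp_power_dvd)
  qed
  also have "\<dots> = N" using prod_prime_factors[of N] assms(1) by simp
  finally show "(\<Prod>p\<in>prime_factors N. p ^ f p) dvd N" .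
qed

lemma mu_image_sub:
  assumes "N > 0" "A \<subseteq> {d. d dvd N}"
    "\<And>d. d dvd N \<Longrightarrow> d \<in> A \<longleftrightarrow> mu N d \<in> B"
    "B \<subseteq> (\<Pi>\<^sub>E p\<in>prime_factors N. {0..multiplicity p N})"
  shows "card A = card B"
proof -
  have "card A = card (mu N ` A)"
    using inj_on_subset[OF mu_inj[OF assms(1)] assms(2)] by (simp add: card_image)
  also have "mu N ` A = B"
  proof
    show "mu N ` A \<subseteq> B" using assms(2,3) by auto
    show "B \<subseteq> mu N ` A"
    proof
      fix f assume f: "f \<in> B"
      hence f': "f \<in> (\<Pi>\<^sub>E p\<in>prime_factors N. {0..multiplicity p N})" using assms(4) by auto
      let ?d = "\<Prod>p\<in>prime_factors N. p ^ f p"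
      have "?d \<in> A" using assms(3) mu_prod[OF assms(1) f'] f by auto
      thus "f \<in> mu N ` A" using mu_prod[OF assms(1) f'] by (metis imageI)
    qed
  qed
  finally show ?thesis .
qed

lemma card_divisors:
  fixes N :: nat
  assumes "N > 0"
  shows "card {d. d dvd N} = (\<Prod>p\<in>prime_factors N. multiplicity p N + 1)"
proof -
  have "card {d. d dvd N} = card (\<Pi>\<^sub>E p\<in>prime_factors N. {0..multiplicity p N})"
  proof (rule mu_image_sub[OF assms])
    fix d assume d: "d dvd N"
    show "d \<in> {d. d dvd N} \<longleftrightarrow> mu N d \<in> (\<Pi>\<^sub>E p\<in>prime_factors N. {0..multiplicity p N})"
      using d assms by (auto simp: mu_def intro!: dvd_imp_multiplicity_le)
  qed auto
  also have "\<dots> = (\<Prod>p\<in>prime_factors N. multiplicity p N + 1)"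
    by (simp add: card_PiE)
  finally show ?thesis .
qed



lemma unitary_char:
  fixes n d :: nat
  assumes n: "n > 0" and d: "d dvd n"
  shows "coprime d (n div d) \<longleftrightarrow>
         (\<forall>p\<in>prime_factors n. multiplicity p d \<in> {0, multiplicity p n})"
proof -
  define e where "e = n div d"
  have nde: "n = d * e" using d by (simp add: e_def)
  have "d \<noteq> 0" using n d by (intro notI) simp
  hence "d > 0" by simp
  have "e \<noteq> 0" using n nde by (intro notI) simp
  hence "e > 0" by simp
  have vm: "multiplicity p n = multiplicity p d + multiplicity p e" if "prime p" for p
  proof -
    have "multiplicity p (d * e) = multiplicity p d + multiplicity p e"
      by (rule prime_elem_multiplicity_mult_distrib[OF prime_imp_prime_elem[OF that] \<open>d \<noteq> 0\<close> \<open>e \<noteq> 0\<close>])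
    thus ?thesis using nde by simp
  qed
  show ?thesis unfolding e_def[symmetric]
  proof
    assume c: "coprime d e"
    show "\<forall>p\<in>prime_factors n. multiplicity p d \<in> {0, multiplicity p n}"
    proof
      fix p assume pP: "p \<in> prime_factors n"
      hence p: "prime p" by (rule in_prime_factors_imp_prime)
      show "multiplicity p d \<in> {0, multiplicity p n}"
      proof (rule ccontr)
        assume A: "multiplicity p d \<notin> {0, multiplicity p n}"
        have "multiplicity p d > 0" using A by simp
        moreover have "multiplicity p e > 0" using A vm[OF p] by simp
        ultimately have "p dvd d" "p dvd e"
          using prime_multiplicity_gt_zero_iff[OF prime_imp_prime_elem[OF p] \<open>d \<noteq> 0\<close>]
                prime_multiplicity_gt_zero_iff[OF prime_imp_prime_elem[OF p] \<open>e \<noteq> 0\<close>] by simp_all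
        hence "is_unit p" using coprime_common_divisor c by blast
        thus False using p by simp
      qed
    qed
  next
    assume H: "\<forall>p\<in>prime_factors n. multiplicity p d \<in> {0, multiplicity p n}"
    show "coprime d e"
    proof (rule ccontr)
      assume "\<not> coprime d e"
      then obtain c where c: "c dvd d" "c dvd e" "\<not> is_unit c" by (rule not_coprimeE)
      from c(3) have "c \<noteq> 1" by (intro notI) simp
      then obtain q where q: "prime q" "q dvd c" using prime_factor_nat by blast
      have qd: "q dvd d" using q(2) c(1) by (rule dvd_trans)
      have qe: "q dvd e" using q(2) c(2) by (rule dvd_trans)
      have "q dvd n" unfolding nde using qd by (rule dvd_mult2)
      hence qP: "q \<in> prime_factors n" using q(1) n by (intro prime_factorsI) simp_all
      have "multiplicity q d > 0" "multiplicity q e > 0"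
          using prime_multiplicity_gt_zero_iff[OF prime_imp_prime_elem[OF q(1)] \<open>d \<noteq> 0\<close>]
                prime_multiplicity_gt_zero_iff[OF prime_imp_prime_elem[OF q(1)] \<open>e \<noteq> 0\<close>] qd qe
          by simp_all
      moreover have "multiplicity q d \<in> {0, multiplicity q n}" using H qP by blast
      ultimately show False using vm[OF q(1)] by simp
    qed
  qed
qed


lemma card_unitary:
  fixes n :: nat
  assumes "n > 0"
  shows "card {d. d dvd n \<and> coprime d (n div d)} = 2 ^ card (prime_factors n)"
proof -
  have "card {d. d dvd n \<and> coprime d (n div d)} =
        card (\<Pi>\<^sub>E p\<in>prime_factors n. {0, multiplicity p n})"
  proof (rule mu_image_sub[OF assms])
    fix d assume d: "d dvd n"
    have "mu n d \<in> (\<Pi>\<^sub>E p\<in>prime_factors n. {0, multiplicity p n}) \<longleftrightarrow>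
          (\<forall>p\<in>prime_factors n. multiplicity p d \<in> {0, multiplicity p n})"
      unfolding mu_def by (rule restrict_PiE_iff)
    thus "d \<in> {d. d dvd n \<and> coprime d (n div d)} \<longleftrightarrow>
          mu n d \<in> (\<Pi>\<^sub>E p\<in>prime_factors n. {0, multiplicity p n})"
      using unitary_char[OF assms d] d by simp
  next
    show "{d. d dvd n \<and> coprime d (n div d)} \<subseteq> {d. d dvd n}" by blast
  next
    show "(\<Pi>\<^sub>E p\<in>prime_factors n. {0, multiplicity p n}) \<subseteq> (\<Pi>\<^sub>E p\<in>prime_factors n. {0..multiplicity p n})"
      by (rule PiE_mono) auto
  qed
  also have "\<dots> = (\<Prod>p\<in>prime_factors n. card {0, multiplicity p n})"
    by (rule card_PiE) simp
  also have "\<dots> = (\<Prod>p\<in>prime_factors n. 2)"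
  proof (rule prod.cong[OF refl])
    fix p assume p: "p \<in> prime_factors n"
    have "multiplicity p n > 0" using p unfolding prime_factors_multiplicity by simp
    thus "card {0, multiplicity p n} = 2" by simp
  qed
  also have "\<dots> = 2 ^ card (prime_factors n)" by simp
  finally show ?thesis .
qed



lemma arith_core:
  fixes P :: "nat set" and a :: "nat \<Rightarrow> nat" and m s :: nat
  assumes fin: "finite P" and s: "card P = s" "s \<ge> 2" and apos: "\<And>p. p \<in> P \<Longrightarrow> a p \<ge> 1"
    and eq: "2^(m+2) * (2^(m+1)+1)^(m+2) = 2^s * (\<Prod>p\<in>P. 2^(s-1) * a p + 1)"
  shows "s = m + 2 \<and> (\<forall>p\<in>P. a p = 1)"
proof -
  define c :: nat where "c = 2^(m+1)+1"
  define Q where "Q = (\<Prod>p\<in>P. 2^(s-1) * a p + 1)"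
  have eq': "2^(m+2) * c^(m+2) = 2^s * Q" using eq unfolding c_def Q_def .
  have codd: "odd c" unfolding c_def by simp
  have "odd (2^(s-1) * a p + 1)" for p
  proof -
    have "even ((2::nat)^(s-1))" using s(2) by simp
    thus ?thesis by simp
  qed
  hence Qodd: "odd Q" unfolding Q_def by (simp add: even_prod_iff[OF fin])
  have sm: "s = m + 2"
  proof (rule ccontr)
    assume ne: "s \<noteq> m + 2"
    show False
    proof (cases "s < m + 2")
      case True
      have e1: "(2::nat)^(s + (m+2-s)) = 2^s * 2^(m+2-s)" by (rule power_add)
      have "s + (m+2-s) = m+2" using True by simp
      hence "(2::nat)^(m+2) = 2^s * 2^(m+2-s)" using e1 by metis
      hence "2^s * (2^(m+2-s) * c^(m+2)) = 2^s * Q" using eq' by (simp add: mult.assoc)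
      hence "2^(m+2-s) * c^(m+2) = Q" by simp
      moreover have "even ((2::nat)^(m+2-s) * c^(m+2))" using True by simp
      ultimately show False using Qodd by simp
    next
      case False
      hence F: "s > m + 2" using ne by simp
      have e1: "(2::nat)^((m+2) + (s-(m+2))) = 2^(m+2) * 2^(s-(m+2))" by (rule power_add)
      have "(m+2) + (s-(m+2)) = s" using F by simp
      hence "(2::nat)^s = 2^(m+2) * 2^(s-(m+2))" using e1 by metis
      hence "2^(m+2) * c^(m+2) = 2^(m+2) * (2^(s-(m+2)) * Q)" using eq' by (simp add: mult.assoc)
      hence "c^(m+2) = 2^(s-(m+2)) * Q" by simp
      moreover have "even ((2::nat)^(s-(m+2)) * Q)" using F by simp
      moreover have "odd (c^(m+2))" using codd by simp
      ultimately show False by simp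
    qed
  qed
  have Qc: "Q = c^(m+2)" using eq' sm by simp
  have "\<forall>p\<in>P. a p = 1"
  proof (rule ccontr)
    assume "\<not> (\<forall>p\<in>P. a p = 1)"
    then obtain p where p: "p \<in> P" "a p \<noteq> 1" by blast
    hence "a p \<ge> 2" using apos[OF p(1)] by simp
    hence "2^(m+1) * 2 \<le> 2^(m+1) * a p" by simp
    hence lt: "c < 2^(s-1) * a p + 1" unfolding c_def sm by simp
    have "(\<Prod>q\<in>P. c) < (\<Prod>q\<in>P. 2^(s-1) * a q + 1)"
    proof (rule prod_mono_strict[where f="\<lambda>q. c" and g="\<lambda>q. 2^(s-1) * a q + 1", OF p(1) lt fin])
      fix q assume q: "q \<in> P"
      have "2^(m+1) * 1 \<le> 2^(m+1) * a q" using apos[OF q] by (intro mult_le_mono2)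
      hence "c \<le> 2^(s-1) * a q + 1" unfolding c_def sm by simp
      thus "0 \<le> c \<and> c \<le> 2^(s-1) * a q + 1" by simp
    qed simp
    hence "c^(m+2) < Q" unfolding Q_def using s sm by simp
    thus False using Qc by simp
  qed
  with sm show ?thesis by simp
qed


theorem mainTheorem13:
  fixes m n :: nat
  assumes "m \<ge> 1"
    and "K_T0Tstar_perfect (2^m * (2^(m+1) + 1)^(m+2)) n"
  shows "(\<exists>p. prime p \<and> n = p ^ (2^(m+1) * (2^(m+1) + 1)^(m+2) - 1))
       \<or> (\<exists>P. finite P \<and> card P = m + 2 \<and> (\<forall>p\<in>P. prime p) \<and> n = \<Prod>P)"
proof -
  define K :: nat where "K = 2^m * (2^(m+1) + 1)^(m+2)"
  define N where "N = unitary_divprod n"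
  define P where "P = prime_factors n"
  define s where "s = card P"
  define u :: nat where "u = 2^s"
  define a where "a = (\<lambda>p. multiplicity p n)"
  have n1: "n > 1" and TN: "divprod N = n ^ K"
    using assms(2) unfolding K_T0Tstar_perfect_def K_def N_def by auto
  have n0: "n > 0" using n1 by simp
  have finP: "finite P" unfolding P_def by simp
  obtain q where q: "prime q" "q dvd n" using prime_factor_nat[of n] n1 by auto
  have "q \<in> P" unfolding P_def using q n0 by (intro prime_factorsI) simp_all
  hence "P \<noteq> {}" by blast
  hence s1: "s \<ge> 1" unfolding s_def using finP by (simp add: Suc_le_eq card_gt_0_iff)
  have u0: "u > 0" unfolding u_def by simp
  have N2: "N^2 = n^u"
    unfolding N_def u_def s_def P_def using unitary_sq[OF n0] card_unitary[OF n0] by simp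
  have "N \<noteq> 0"
  proof
    assume "N = 0"
    hence "n^u = 0" using N2 by simp
    thus False using n0 by simp
  qed
  hence N0: "N > 0" by simp
  define \<tau> where "\<tau> = card {d. d dvd N}"
  have T2: "(divprod N)^2 = N ^ \<tau>" unfolding \<tau>_def by (rule divprod_sq[OF N0])
  have "n ^ (4*K) = ((n^K)^2)^2" by (simp add: power_mult[symmetric] mult.commute)
  also have "\<dots> = (N^\<tau>)^2" using T2 TN by simp
  also have "\<dots> = (N^2)^\<tau>" by (simp add: power_mult[symmetric] mult.commute)
  also have "\<dots> = n^(u*\<tau>)" using N2 by (simp add: power_mult)
  finally have "n ^ (4*K) = n^(u*\<tau>)" .
  hence KE: "4*K = u*\<tau>" using n1 by simp
  have PN: "prime_factors N = P"
  proof -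
    have "prime_factors N = {p. prime p \<and> p dvd N}" using N0 by (simp add: prime_factors_dvd)
    also have "\<dots> = {p. prime p \<and> p dvd n}"
    proof (rule Collect_cong)
      fix p
      show "(prime p \<and> p dvd N) = (prime p \<and> p dvd n)"
      proof (cases "prime p")
        case True
        have "p dvd N \<longleftrightarrow> p dvd N^2" using True by (simp add: prime_dvd_power_iff)
        also have "\<dots> \<longleftrightarrow> p dvd n^u" using N2 by simp
        also have "\<dots> \<longleftrightarrow> p dvd n" using True u0 by (simp add: prime_dvd_power_iff)
        finally show ?thesis by simp
      qed simp
    qed
    also have "\<dots> = P" unfolding P_def using n0 by (simp add: prime_factors_dvd)
    finally show ?thesis .
  qed
  have vN: "multiplicity p N = 2^(s-1) * a p" if "p \<in> P" for p
  proof -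
    have p: "prime p" using that unfolding P_def by (rule in_prime_factors_imp_prime)
    have "multiplicity p (N^2) = multiplicity p (n^u)" using N2 by simp
    hence "2 * multiplicity p N = u * multiplicity p n"
      using prime_elem_multiplicity_power_distrib[OF prime_imp_prime_elem[OF p] \<open>N \<noteq> 0\<close>, of 2]
            prime_elem_multiplicity_power_distrib[OF prime_imp_prime_elem[OF p], of n u] n0
      by simp
    moreover have "u = 2 * 2^(s-1)" unfolding u_def using s1
      by (metis Suc_diff_le diff_Suc_1 power_Suc)
    ultimately show ?thesis unfolding a_def by simp
  qed
  have "\<tau> = (\<Prod>p\<in>P. multiplicity p N + 1)"
    unfolding \<tau>_def using card_divisors[OF N0] PN by simp
  also have "\<dots> = (\<Prod>p\<in>P. 2^(s-1) * a p + 1)" by (rule prod.cong[OF refl]) (simp add: vN)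
  finally have tau: "\<tau> = (\<Prod>p\<in>P. 2^(s-1) * a p + 1)" .
  have eq: "2^(m+2) * (2^(m+1)+1)^(m+2) = 2^s * (\<Prod>p\<in>P. 2^(s-1) * a p + 1)"
    using KE unfolding K_def u_def tau by (simp add: mult.assoc)
  have nprod: "n = (\<Prod>p\<in>P. p ^ a p)"
    unfolding P_def a_def using prod_prime_factors[of n] n0 by simp
  have apos: "a p \<ge> 1" if "p \<in> P" for p
    using that unfolding a_def P_def prime_factors_multiplicity by simp
  show ?thesis
  proof (cases "s = 1")
    case True
    then obtain p where Pp: "P = {p}" unfolding s_def by (rule card_1_singletonE)
    have pr: "prime p" using Pp unfolding P_def by (metis in_prime_factors_imp_prime insertI1)
    have "2^(m+2) * (2^(m+1)+1)^(m+2) = 2 * (a p + 1)" using eq True Pp by simp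
    hence "2 * (2^(m+1) * (2^(m+1)+1)^(m+2)) = 2 * (a p + 1)" by (simp add: mult.assoc)
    hence "a p = 2^(m+1) * (2^(m+1)+1)^(m+2) - 1" by simp
    moreover have "n = p ^ a p" using nprod Pp by simp
    ultimately have "n = p ^ (2^(m+1) * (2^(m+1)+1)^(m+2) - 1)" by simp
    with pr show ?thesis by (intro disjI1 exI[of _ p] conjI)
  next
    case False
    hence s2: "s \<ge> 2" using s1 by simp
    from arith_core[OF finP s_def[symmetric] s2 apos eq]
    have sm: "s = m + 2" and a1: "\<forall>p\<in>P. a p = 1" by auto
    have "n = \<Prod>P" unfolding nprod using a1 by (intro prod.cong) simp_all
    moreover have "\<forall>p\<in>P. prime p" unfolding P_def by blast
    ultimately show ?thesis using finP sm s_def by (intro disjI2 exI[of _ P] conjI) simp_all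
  qed
qed


end
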